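(* Let $\mathcal N=\mathcal N(x)$ be a nowhere vanishing function on $S$ (lifted to $T^*S$). Then $\mathcal N$ is a conformal factor for the almost symplectic form $\Omega+\sigma+\rho^*\mathbf f$ on $T^*S$ (i.e. $d(\mathcal N(\Omega+\sigma+\rho^*\mathbf f))=0$) if and only if $\mathcal N$ is a conformal factor for the almost symplectic form $\Omega+\sigma$ (i.e. $d(\mathcal N(\Omega+\sigma))=0$) and the two-form $\mathbf f^*=\mathcal N\mathbf f$ on $S$ is closed.
   Context: Setting: $S$ ($\dim S=n$) is the base of a gyroscopic $G$–Chaplygin system: $G$ acts freely on $Q$, $\pi\colon Q\to S=Q/G$, $L=\frac12\mathbf G(\dot q,\dot q)-V$ with $G$-invariant $\mathbf G,V$, $\mathbf F$ a $G$-invariant two-form on $Q$, $\mathcal D$ a $G$-invariant distribution complementary to $\ker d\pi$. Reduced data on $S$: metric $\mathbf g(X,Y)=\mathbf G(X^h,Y^h)$, two-form $\mathbf f(X,Y)=\mathbf F(X^h,Y^h)$ ($X^h\in\mathcal D$ horizontal lift), $\Sigma(X,Y,Z)=\mathbf G(X^h,B(Y^h,Z^h))$ where $B(X,Y)=-A([X^h,Y^h])$ is the curvature of $\mathcal D$, and the skew $(1,2)$-tensor $\mathbf C$ with $\Sigma(X,Y,Z)=\mathbf g(X,\mathbf C(Y,Z))$, locally $\mathbf C(\partial_i,\partial_j)=\sum_kC^k_{ij}\partial_k$. On $T^*S$ with canonical coordinates $(x,p)$: $\Omega=\sum_idp_i\wedge dx_i$, $\sigma=\sum_{1\le i<j\le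 n}\sum_kC^k_{ij}(x)p_k\,dx_i\wedge dx_j$, and $\rho\colon T^*S\to S$ is the projection. An almost symplectic form is a nondegenerate (not necessarily closed) two-form. *)

theory Defs
  imports "HOL-Analysis.Analysis"
begin

text \<open>A chart of S is an open set U of real^'n (coordinates x);
 T*S over it is U \<times> UNIV in (real^'n) \<times> (real^'n) (coordinates (x,p)).
 Coordinates on T*S are indexed by 'n + 'n: Inl i is x_i, Inr i is p_i.
 A two-form is given by its (antisymmetric) component functions
 w z a b = w(e_a, e_b), i.e. w = sum over a<b of w z a b dz_a wedge dz_b.\<close>

definition pderiv :: "('a::real_normed_vector \<Rightarrow> real) \<Rightarrow> 'a \<Rightarrow> 'a \<Rightarrow> real" where
  "pderiv g z v = frechet_derivative g (at z) v"

definition closed_form2 ::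
  "'a::real_normed_vector set \<Rightarrow> ('i \<Rightarrow> 'a) \<Rightarrow> ('a \<Rightarrow> 'i \<Rightarrow> 'i \<Rightarrow> real) \<Rightarrow> bool" where
  "closed_form2 W e w \<longleftrightarrow>
     (\<forall>z\<in>W. \<forall>a b c. pderiv (\<lambda>y. w y b c) z (e a) + pderiv (\<lambda>y. w y c a) z (e b)
                     + pderiv (\<lambda>y. w y a b) z (e c) = 0)"

definition xbasis :: "'n::finite \<Rightarrow> real^'n" where
  "xbasis i = axis i 1"

definition cbasis :: "'n::finite + 'n \<Rightarrow> (real^'n) \<times> (real^'n)" where
  "cbasis a = (case a of Inl i \<Rightarrow> (axis i 1, 0) | Inr i \<Rightarrow> (0, axis i 1))"

definition Omega :: "'n + 'n \<Rightarrow> 'n + 'n \<Rightarrow> real" where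
  "Omega a b = (case (a, b) of
      (Inr i, Inl j) \<Rightarrow> (if i = j then 1 else 0)
    | (Inl i, Inr j) \<Rightarrow> (if i = j then -1 else 0)
    | _ \<Rightarrow> 0)"

text \<open>sigma = sum_{i<j} sum_k C^k_ij(x) p_k dx_i wedge dx_j, with C k i j x = C^k_ij(x)
 skew in i j.\<close>
definition sigma :: "('n::finite \<Rightarrow> 'n \<Rightarrow> 'n \<Rightarrow> real^'n \<Rightarrow> real)
     \<Rightarrow> (real^'n) \<times> (real^'n) \<Rightarrow> 'n + 'n \<Rightarrow> 'n + 'n \<Rightarrow> real" where
  "sigma C z a b = (case (a, b) of
      (Inl i, Inl j) \<Rightarrow> (\<Sum>k\<in>UNIV. C k i j (fst z) * (snd z $ k))
    | _ \<Rightarrow> 0)"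

definition pullf :: "('n \<Rightarrow> 'n \<Rightarrow> real^'n \<Rightarrow> real)
     \<Rightarrow> (real^'n) \<times> (real^'n) \<Rightarrow> 'n + 'n \<Rightarrow> 'n + 'n \<Rightarrow> real" where
  "pullf f z a b = (case (a, b) of
      (Inl i, Inl j) \<Rightarrow> f i j (fst z)
    | _ \<Rightarrow> 0)"

end

theory Submission imports Defs begin

lemma pd_add:
  assumes "g differentiable (at z)" "h differentiable (at z)"
  shows "pderiv (\<lambda>y. g y + h y) z v = pderiv g z v + pderiv h z v"
proof -
  obtain g' where g: "(g has_derivative g') (at z)" using assms(1) differentiable_def by blast
  obtain h' where h: "(h has_derivative h') (at z)" using assms(2) differentiable_def by blast
  have "((\<lambda>y. g y + h y) has_derivative (\<lambda>v. g' v + h' v)) (at z)"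
    using has_derivative_add[OF g h] .
  then show ?thesis unfolding pderiv_def
    using frechet_derivative_at[OF g] frechet_derivative_at[OF h] frechet_derivative_at
    by metis
qed

lemma pd_fst:
  fixes G :: "'a::real_normed_vector \<Rightarrow> real"
  assumes "G differentiable (at (fst z))"
  shows "pderiv (\<lambda>y. G (fst y)) z v = pderiv G (fst z) (fst v)"
proof -
  obtain G' where g: "(G has_derivative G') (at (fst z))" using assms differentiable_def by blast
  have "((\<lambda>y. G (fst y)) has_derivative (\<lambda>v. G' (fst v))) (at z)"
    using diff_chain_at[OF has_derivative_fst[OF has_derivative_ident] g] by (simp add: o_def)
  then show ?thesis unfolding pderiv_def
    using frechet_derivative_at[OF g] frechet_derivative_at by metis
qed

lemma pd_zero:
  fixes g :: "'a::real_normed_vector \<Rightarrow> real"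
  assumes "g differentiable (at z)" "\<And>t. g (z + t *\<^sub>R v) = g z"
  shows "pderiv g z v = 0"
proof -
  obtain g' where g: "(g has_derivative g') (at z)" using assms differentiable_def by blast
  have l: "((\<lambda>t::real. z + t *\<^sub>R v) has_derivative (\<lambda>t. t *\<^sub>R v)) (at 0)"
    by (auto intro!: derivative_eq_intros)
  have g0: "(g has_derivative g') (at ((\<lambda>t::real. z + t *\<^sub>R v) 0))" using g by simp
  have "((\<lambda>t::real. g (z + t *\<^sub>R v)) has_derivative (\<lambda>t. g' (t *\<^sub>R v))) (at 0)"
    using diff_chain_at[OF l g0] by (simp add: o_def)
  moreover have "((\<lambda>t::real. g (z + t *\<^sub>R v)) has_derivative (\<lambda>t. 0)) (at 0)"
    using assms(2) by simp
  ultimately have "(\<lambda>t. g' (t *\<^sub>R v)) = (\<lambda>t. 0)" by (rule has_derivative_unique)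
  then have "g' v = 0" by (metis scaleR_one)
  then show ?thesis unfolding pderiv_def using frechet_derivative_at[OF g] by metis
qed

lemma pd_at0:
  assumes "G differentiable (at x)"
  shows "pderiv G x 0 = 0"
proof -
  have "(G has_derivative frechet_derivative G (at x)) (at x)"
    using assms frechet_derivative_works by blast
  then have "linear (frechet_derivative G (at x))" using has_derivative_linear by blast
  then show ?thesis unfolding pderiv_def using linear_0 by blast
qed

lemma d_snd: "(\<lambda>y::(real^'n)\<times>(real^'n). snd y $ k) differentiable (at z)"
proof -
  have "bounded_linear (\<lambda>y::(real^'n)\<times>(real^'n). snd y $ k)"
    using bounded_linear_compose[OF bounded_linear_vec_nth[of k] bounded_linear_snd] by (simp add: o_def)
  then show ?thesis by (rule bounded_linear_imp_differentiable)
qed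

lemma d_fst:
  assumes "G differentiable (at (fst z))"
  shows "(\<lambda>y. G (fst y)) differentiable (at z)"
proof -
  have "fst differentiable (at z)"
    by (rule bounded_linear_imp_differentiable[OF bounded_linear_fst])
  then show ?thesis using differentiable_compose[of G fst z UNIV] assms by simp
qed

theorem proposition5p3:
  fixes U :: "(real^'n) set" and N :: "real^'n \<Rightarrow> real"
    and C :: "'n \<Rightarrow> 'n \<Rightarrow> 'n \<Rightarrow> real^'n \<Rightarrow> real"
    and f :: "'n \<Rightarrow> 'n \<Rightarrow> real^'n \<Rightarrow> real"
  assumes "open U"
    and "\<forall>x\<in>U. N x \<noteq> 0"
    and "\<forall>x\<in>U. N differentiable (at x)"
    and "\<forall>k i j. \<forall>x\<in>U. (\<lambda>y. C k i j y) differentiable (at x)"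
    and "\<forall>k i j x. C k i j x = - C k j i x"
    and "\<forall>i j. \<forall>x\<in>U. (\<lambda>y. f i j y) differentiable (at x)"
    and "\<forall>i j x. f i j x = - f j i x"
  shows "closed_form2 (U \<times> UNIV) cbasis
           (\<lambda>z a b. N (fst z) * (Omega a b + sigma C z a b + pullf f z a b))
         \<longleftrightarrow>
         closed_form2 (U \<times> UNIV) cbasis (\<lambda>z a b. N (fst z) * (Omega a b + sigma C z a b))
         \<and> closed_form2 U xbasis (\<lambda>x i j. N x * f i j x)"
proof -
  note A = assms
  define W1 where "W1 = (\<lambda>(z::(real^'n)\<times>(real^'n)) a b. N (fst z) * (Omega a b + sigma C z a b))"
  define W2 where "W2 = (\<lambda>(z::(real^'n)\<times>(real^'n)) a b. N (fst z) * pullf f z a b)"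
  define F where "F = (\<lambda>x i j. N x * f i j x)"
  define D where "D = (\<lambda>w (z::(real^'n)\<times>(real^'n)) a b c. pderiv (\<lambda>y. w y b c) z (cbasis a)
        + pderiv (\<lambda>y. w y c a) z (cbasis b) + pderiv (\<lambda>y. w y a b) z (cbasis c))"
  define DF where "DF = (\<lambda>x i j k. pderiv (\<lambda>y. F y j k) x (xbasis i)
        + pderiv (\<lambda>y. F y k i) x (xbasis j) + pderiv (\<lambda>y. F y i j) x (xbasis k))"
  have dF: "(\<lambda>y. F y j k) differentiable (at x)" if "x \<in> U" for x j k
    unfolding F_def using A(3,6) that by auto
  have dW2: "(\<lambda>y. W2 y b c) differentiable (at z)" if "fst z \<in> U" for z b c
  proof (cases b; cases c)
    fix j k assume "b = Inl j" "c = Inl k"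
    then have "(\<lambda>y. W2 y b c) = (\<lambda>y. F (fst y) j k)"
      by (simp add: W2_def F_def pullf_def)
    then show ?thesis using d_fst[of "\<lambda>y. F y j k" z] dF[OF that] by simp
  qed (simp_all add: W2_def pullf_def)
  have dN: "(\<lambda>y. N (fst y)) differentiable (at z)" if "fst z \<in> U" for z :: "(real^'n)\<times>(real^'n)"
    using d_fst[of N z] A(3) that by simp
  have dC: "(\<lambda>y. C k i j (fst y)) differentiable (at z)" if "fst z \<in> U" for z :: "(real^'n)\<times>(real^'n)" and k i j
    using d_fst[of "C k i j" z] A(4) that by simp
  have dW1: "(\<lambda>y. W1 y b c) differentiable (at z)" if "fst z \<in> U" for z b c
  proof (cases b; cases c)
    fix j k assume "b = Inl j" "c = Inl k"
    then have e: "(\<lambda>y. W1 y b c) = (\<lambda>y. N (fst y) * (\<Sum>m\<in>UNIV. C m j k (fst y) * (snd y $ m)))"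
      by (simp add: W1_def Omega_def sigma_def)
    show ?thesis unfolding e
      by (intro differentiable_mult differentiable_sum ballI dN dC d_snd that) simp
  qed (auto simp add: W1_def Omega_def sigma_def intro!: differentiable_mult dN that)
  have Wsplit: "(\<lambda>z a b. N (fst z) * (Omega a b + sigma C z a b + pullf f z a b))
      = (\<lambda>z a b. W1 z a b + W2 z a b)"
    by (simp add: W1_def W2_def fun_eq_iff algebra_simps)
  have Dsplit: "D (\<lambda>z a b. W1 z a b + W2 z a b) z a b c = D W1 z a b c + D W2 z a b c"
    if "fst z \<in> U" for z a b c
    unfolding D_def using pd_add[OF dW1[OF that] dW2[OF that]] by simp
  have T2: "pderiv (\<lambda>y. W2 y b c) z v = (case b of Inl j \<Rightarrow> (case c of Inl k \<Rightarrow>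
       pderiv (\<lambda>x. F x j k) (fst z) (fst v) | Inr _ \<Rightarrow> 0) | Inr _ \<Rightarrow> 0)"
    if "fst z \<in> U" for z b c v
  proof (cases b; cases c)
    fix j k assume "b = Inl j" "c = Inl k"
    then have "(\<lambda>y. W2 y b c) = (\<lambda>y. F (fst y) j k)"
      by (simp add: W2_def F_def pullf_def)
    then show ?thesis using pd_fst[of "\<lambda>y. F y j k" z v] dF that \<open>b = Inl j\<close> \<open>c = Inl k\<close> by simp
  qed (simp_all add: W2_def pullf_def pderiv_def)
  have DW2: "D W2 z a b c = (case a of Inl i \<Rightarrow> (case b of Inl j \<Rightarrow> (case c of Inl k \<Rightarrow>
       DF (fst z) i j k | Inr _ \<Rightarrow> 0) | Inr _ \<Rightarrow> 0) | Inr _ \<Rightarrow> 0)"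
    if "fst z \<in> U" for z a b c
    unfolding D_def DF_def T2[OF that]
    by (cases a; cases b; cases c) (simp_all add: cbasis_def xbasis_def pd_at0 dF that)
  have DW1: "D W1 (x, 0) (Inl i) (Inl j) (Inl k) = 0" if "x \<in> U" for x i j k
  proof -
    have "pderiv (\<lambda>y. W1 y (Inl b) (Inl c)) (x, 0) (cbasis (Inl a)) = 0" for a b c
    proof (rule pd_zero)
      show "(\<lambda>y. W1 y (Inl b) (Inl c)) differentiable (at (x, 0))" using dW1[of "(x,0)"] that by simp
    qed (auto simp: W1_def Omega_def sigma_def cbasis_def)
    then show ?thesis unfolding D_def by simp
  qed
  have cf: "closed_form2 (U \<times> UNIV) cbasis w \<longleftrightarrow> (\<forall>z. fst z \<in> U \<longrightarrow> (\<forall>a b c. D w z a b c = 0))" for w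
    unfolding closed_form2_def D_def by (auto simp: mem_Times_iff)
  have cfF: "closed_form2 U xbasis F \<longleftrightarrow> (\<forall>x\<in>U. \<forall>i j k. DF x i j k = 0)"
    unfolding closed_form2_def DF_def by simp
  have W1e: "(\<lambda>z a b. N (fst z) * (Omega a b + sigma C z a b)) = W1" by (simp add: W1_def)
  have Fe: "(\<lambda>x i j. N x * f i j x) = F" by (simp add: F_def)
  let ?W = "\<lambda>z a b. W1 z a b + W2 z a b"
  have L1: "\<forall>x\<in>U. \<forall>i j k. DF x i j k = 0"
    if H: "\<forall>z. fst z \<in> U \<longrightarrow> (\<forall>a b c. D ?W z a b c = 0)"
  proof (intro ballI allI)
    fix x i j k assume x: "x \<in> U"
    have "D ?W (x, 0) (Inl i) (Inl j) (Inl k) = 0" using H x by auto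
    then show "DF x i j k = 0" using Dsplit[of "(x,0)"] DW1[OF x] DW2[of "(x,0)"] x by simp
  qed
  have L2: "\<forall>z. fst z \<in> U \<longrightarrow> (\<forall>a b c. D W1 z a b c = 0)"
    if H: "\<forall>z. fst z \<in> U \<longrightarrow> (\<forall>a b c. D ?W z a b c = 0)"
      and G: "\<forall>x\<in>U. \<forall>i j k. DF x i j k = 0"
  proof (intro allI impI)
    fix z :: "(real^'n)\<times>(real^'n)" and a b c assume z: "fst z \<in> U"
    have "D W2 z a b c = 0" using DW2[OF z] G z by (simp split: sum.split)
    moreover have "D ?W z a b c = 0" using H z by blast
    ultimately show "D W1 z a b c = 0" using Dsplit[OF z] by simp
  qed
  have L3: "\<forall>z. fst z \<in> U \<longrightarrow> (\<forall>a b c. D ?W z a b c = 0)"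
    if H: "\<forall>z. fst z \<in> U \<longrightarrow> (\<forall>a b c. D W1 z a b c = 0)"
      and G: "\<forall>x\<in>U. \<forall>i j k. DF x i j k = 0"
  proof (intro allI impI)
    fix z :: "(real^'n)\<times>(real^'n)" and a b c assume z: "fst z \<in> U"
    have "D W2 z a b c = 0" using DW2[OF z] G z by (simp split: sum.split)
    moreover have "D W1 z a b c = 0" using H z by blast
    ultimately show "D ?W z a b c = 0" using Dsplit[OF z] by simp
  qed
  show ?thesis
    unfolding Wsplit W1e Fe cf cfF using L1 L2 L3 by blast
qed

end
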